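(* The duality gap between ADP and SFP is unbounded: for every $N\in\mathbb{N}$ there exist a directed graph $G=(V,A)$ and vertices $s,t\in V$ such that the minimum number of arc pairs needed to separate $s$ and $t$ in $G$ exceeds the maximum number of pairwise almost disjoint $s$-$t$-paths in $G$ by at least $N$.
   Context: Directed graphs may contain parallel arcs; paths are directed paths without repeated vertices. A set of paths is almost disjoint if every two of its paths have at most one arc in common. The optimization version of ADP asks for the maximum number of pairwise almost disjoint $s$-$t$-paths in $G$. A set $\mathcal{A}$ of unordered pairs of distinct arcs of $G$ separates $s$ and $t$ if every $s$-$t$-path in $G$ contains both arcs of at least one pair in $\mathcal{A}$; the optimization version of SFP asks for the minimum size of such a set. (The LP relaxations of the natural integer programs for these two problems form a primal-dual pair, so the SFP minimum is always at least the ADP maximum; the duality gap is their difference.) *)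

theory Defs
  imports Main "Graph_Theory.Digraph" "Graph_Theory.Arc_Walk"
begin

text \<open>Directed multigraphs are AFP Graph_Theory pre_digraphs (arcs carry their own
identity, so parallel arcs are allowed); s-t-paths are arc lists with no repeated
vertex (pre_digraph.apath).\<close>

definition st_paths :: "('a,'b) pre_digraph \<Rightarrow> 'a \<Rightarrow> 'a \<Rightarrow> 'b list set" where
  "st_paths G s t = {p. pre_digraph.apath G s p t}"

definition almost_disjoint :: "'b list set \<Rightarrow> bool" where
  "almost_disjoint P \<longleftrightarrow> (\<forall>p\<in>P. \<forall>q\<in>P. p \<noteq> q \<longrightarrow> card (set p \<inter> set q) \<le> 1)"

definition adp_max :: "('a,'b) pre_digraph \<Rightarrow> 'a \<Rightarrow> 'a \<Rightarrow> nat" where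
  "adp_max G s t = Max {card P | P. P \<subseteq> st_paths G s t \<and> almost_disjoint P}"

definition separates :: "('a,'b) pre_digraph \<Rightarrow> 'a \<Rightarrow> 'a \<Rightarrow> 'b set set \<Rightarrow> bool" where
  "separates G s t \<A> \<longleftrightarrow>
     (\<forall>x\<in>\<A>. \<exists>e f. e \<in> arcs G \<and> f \<in> arcs G \<and> e \<noteq> f \<and> x = {e, f}) \<and>
     (\<forall>p\<in>st_paths G s t. \<exists>x\<in>\<A>. x \<subseteq> set p)"

definition sfp_min :: "('a,'b) pre_digraph \<Rightarrow> 'a \<Rightarrow> 'a \<Rightarrow> nat" where
  "sfp_min G s t = Min {card \<A> | \<A>. separates G s t \<A>}"

end

theory Submission imports Defs begin

definition Gr :: "nat \<Rightarrow> nat \<Rightarrow> (nat,nat) pre_digraph" where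
  "Gr q L = \<lparr>verts = {0..L}, arcs = {0..<L*q}, tail = (\<lambda>a. a div q), head = (\<lambda>a. a div q + 1)\<rparr>"

definition Paths :: "nat \<Rightarrow> nat \<Rightarrow> nat list set" where
  "Paths q L = {p. length p = L \<and> (\<forall>i<L. p!i div q = i)}"

lemma cas_Gr: "pre_digraph.cas (Gr q L) u p v \<Longrightarrow> v = u + length p \<and> (\<forall>i<length p. p!i div q = u+i)"
proof (induction p arbitrary: u)
  case Nil then show ?case by (simp add: pre_digraph.cas.simps)
next
  case (Cons e es)
  then have "e div q = u" "pre_digraph.cas (Gr q L) (u+1) es v"
    by (auto simp: pre_digraph.cas.simps Gr_def)
  with Cons.IH[of "u+1"] show ?case
    by (auto simp: nth_Cons split: nat.splits)
qed

lemma cas_Gr2: "\<forall>i<length p. p!i div q = u+i \<Longrightarrow> pre_digraph.cas (Gr q L) u p (u + length p)"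
proof (induction p arbitrary: u)
  case Nil then show ?case by (simp add: pre_digraph.cas.simps)
next
  case (Cons e es)
  have "\<forall>i<length es. es!i div q = (u+1)+i" using Cons.prems by fastforce
  with Cons.IH[of "u+1"] show ?case using Cons.prems[rule_format, of 0]
    by (auto simp: pre_digraph.cas.simps Gr_def)
qed

lemma verts_Gr: "\<forall>i<length p. p!i div q = u+i \<Longrightarrow> pre_digraph.awalk_verts (Gr q L) u p = [u..<u + length p + 1]"
proof (induction p arbitrary: u)
  case Nil then show ?case by (simp add: pre_digraph.awalk_verts.simps)
next
  case (Cons e es)
  have "\<forall>i<length es. es!i div q = (u+1)+i" using Cons.prems by fastforce
  then have "pre_digraph.awalk_verts (Gr q L) (u+1) es = [u+1..<u+1+length es+1]" using Cons.IH by blast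
  moreover have "e div q = u" using Cons.prems[rule_format, of 0] by simp
  ultimately have "pre_digraph.awalk_verts (Gr q L) u (e#es) = u # [u+1..<u+1+length es+1]"
    by (simp add: pre_digraph.awalk_verts.simps Gr_def)
  also have "\<dots> = [u..<u + length (e#es) + 1]" by (simp del: upt_Suc add: upt_conv_Cons)
  finally show ?case .
qed

lemma div_lt: "(a::nat) div q = i \<Longrightarrow> 0 < q \<Longrightarrow> a < (i+1)*q"
  by (metis add.commute div_less_iff_less_mult less_add_one mult.commute)

lemma st_paths_Gr: assumes "0 < q" shows "st_paths (Gr q L) 0 L = Paths q L"
proof (intro set_eqI iffI)
  fix p assume "p \<in> st_paths (Gr q L) 0 L"
  then have "pre_digraph.cas (Gr q L) 0 p L"
    by (simp add: st_paths_def pre_digraph.apath_def pre_digraph.awalk_def)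
  from cas_Gr[OF this] show "p \<in> Paths q L" by (auto simp: Paths_def)
next
  fix p assume "p \<in> Paths q L"
  then have l: "length p = L" and d: "\<forall>i<length p. p!i div q = 0+i" by (auto simp: Paths_def)
  have "set p \<subseteq> {0..<L*q}"
  proof
    fix a assume "a \<in> set p"
    then obtain i where "i < L" "a = p!i" using l by (auto simp: in_set_conv_nth)
    then have "a < (i+1)*q" using d l div_lt[of "p!i" q i] assms by auto
    also have "\<dots> \<le> L*q" using \<open>i<L\<close> by (intro mult_le_mono1) simp
    finally show "a \<in> {0..<L*q}" by simp
  qed
  then show "p \<in> st_paths (Gr q L) 0 L"
    using cas_Gr2[OF d, of L] verts_Gr[OF d, of L] l
    by (simp add: st_paths_def pre_digraph.apath_def pre_digraph.awalk_def Gr_def)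
qed

lemma Paths_sub: assumes "0 < q" "p \<in> Paths q L" shows "set p \<subseteq> {0..<L*q}"
proof
  fix a assume "a \<in> set p"
  then obtain i where "i < L" "a = p!i" using assms by (auto simp: in_set_conv_nth Paths_def)
  then have "a < (i+1)*q" using assms div_lt[of "p!i" q i] by (auto simp: Paths_def)
  also have "\<dots> \<le> L*q" using \<open>i<L\<close> by (intro mult_le_mono1) simp
  finally show "a \<in> {0..<L*q}" by simp
qed

lemma finite_Paths: assumes "0 < q" shows "finite (Paths q L)"
proof -
  have "Paths q L \<subseteq> {xs. set xs \<subseteq> {0..<L*q} \<and> length xs = L}"
    using Paths_sub[OF assms] by (auto simp: Paths_def)
  then show ?thesis using finite_lists_length_eq[of "{0..<L*q}" L] finite_subset by blast
qed

lemma Paths_ne: assumes "0 < q" shows "map (\<lambda>i. i*q) [0..<L] \<in> Paths q L"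
  using assms by (auto simp: Paths_def)

lemma adp_card: assumes "0 < q" "(q+1)*(q+1) < L" "P \<subseteq> Paths q L" "almost_disjoint P"
  shows "card P \<le> q"
proof (rule ccontr)
  assume "\<not> card P \<le> q"
  then have "q+1 \<le> card P" by simp
  then obtain Q where Q: "Q \<subseteq> P" "card Q = q+1"
    by (meson obtain_subset_with_card_n)
  then have fQ: "finite Q" by (metis add_is_0 card.infinite zero_neq_one)
  have ex: "\<exists>pp. fst pp \<in> Q \<and> snd pp \<in> Q \<and> fst pp \<noteq> snd pp \<and> fst pp ! i = snd pp ! i" if "i < L" for i
  proof -
    have "\<not> inj_on (\<lambda>p. p!i mod q) Q"
    proof
      assume "inj_on (\<lambda>p. p!i mod q) Q"
      then have "card Q \<le> card {0..<q}"
        by (rule card_inj_on_le) (use assms in auto)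
      then show False using Q by simp
    qed
    then obtain p p' where pp: "p \<in> Q" "p' \<in> Q" "p \<noteq> p'" "p!i mod q = p'!i mod q"
      by (auto simp: inj_on_def)
    have "p!i div q = i" "p'!i div q = i" using pp Q assms(3) that by (auto simp: Paths_def)
    then have "p!i = p'!i" using pp(4) by (metis div_mult_mod_eq)
    then show ?thesis using pp by (intro exI[of _ "(p,p')"]) auto
  qed
  define g where "g i = (SOME pp. fst pp \<in> Q \<and> snd pp \<in> Q \<and> fst pp \<noteq> snd pp \<and> fst pp ! i = snd pp ! i)" for i
  have g: "fst (g i) \<in> Q \<and> snd (g i) \<in> Q \<and> fst (g i) \<noteq> snd (g i) \<and> fst (g i) ! i = snd (g i) ! i" if "i < L" for i
    unfolding g_def using someI_ex[OF ex[OF that]] .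
  have "\<not> inj_on g {0..<L}"
  proof
    assume "inj_on g {0..<L}"
    moreover have "\<forall>x\<in>{0..<L}. g x \<in> Q \<times> Q" using g by (simp add: mem_Times_iff)
    ultimately have "card {0..<L} \<le> card (Q \<times> Q)"
      using card_inj_on_le[of g "{0..<L}" "Q \<times> Q"] fQ by blast
    then show False using Q assms(2) by (simp add: card_cartesian_product)
  qed
  then obtain i j where ij: "i < L" "j < L" "i \<noteq> j" "g i = g j" by (auto simp: inj_on_def)
  define p where "p = fst (g i)"
  define p' where "p' = snd (g i)"
  have pp: "p \<in> P" "p' \<in> P" "p \<noteq> p'" "p!i = p'!i" "p!j = p'!j"
    using g[OF ij(1)] g[OF ij(2)] ij(4) Q(1) unfolding p_def p'_def by auto
  have pP: "p \<in> Paths q L" using pp assms(3) by auto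
  then have "p!i div q = i" "p!j div q = j" using ij by (auto simp: Paths_def)
  then have "p!i \<noteq> p!j" using ij by metis
  moreover have "{p!i, p!j} \<subseteq> set p \<inter> set p'"
  proof -
    have "length p = L" "length p' = L" using pp pP assms(3) by (auto simp: Paths_def)
    then show ?thesis using pp(4,5) ij nth_mem by (metis Int_iff empty_subsetI insert_subset)
  qed
  ultimately have "2 \<le> card (set p \<inter> set p')"
    by (metis List.finite_set card_2_iff card_mono finite_Int)
  then show False using assms(4) pp unfolding almost_disjoint_def by fastforce
qed

lemma cov_bound: assumes "0 < q" "e \<noteq> f"
  shows "q*q*card {p\<in>Paths q L. {e,f} \<subseteq> set p} \<le> card (Paths q L)"
proof (cases "e div q = f div q")
  case True
  have "{p\<in>Paths q L. {e,f} \<subseteq> set p} = {}"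
  proof (rule ccontr)
    assume "\<not> ?thesis"
    then obtain p where p: "p \<in> Paths q L" "e \<in> set p" "f \<in> set p" by auto
    then obtain k k' where "k < L" "k' < L" "e = p!k" "f = p!k'" by (auto simp: in_set_conv_nth Paths_def)
    then show False using p True assms(2) by (auto simp: Paths_def)
  qed
  then show ?thesis by (metis card.empty mult_0_right le0)
next
  case False
  define i where "i = e div q"
  define j where "j = f div q"
  define C where "C = {p\<in>Paths q L. {e,f} \<subseteq> set p}"
  have C: "p!i = e \<and> p!j = f \<and> i < L \<and> j < L" if "p \<in> C" for p
  proof -
    from that obtain k k' where "k < L" "k' < L" "e = p!k" "f = p!k'" "p \<in> Paths q L"
      by (auto simp: in_set_conv_nth Paths_def C_def)
    then show ?thesis by (auto simp: Paths_def i_def j_def)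
  qed
  have ij: "i \<noteq> j" using False i_def j_def by simp
  define F where "F = (\<lambda>(c,d,p). (p::nat list)[i := i*q+c, j := j*q+d])"
  have "inj_on F ({0..<q} \<times> {0..<q} \<times> C)"
  proof (rule inj_onI)
    fix x y assume "x \<in> {0..<q} \<times> {0..<q} \<times> C" "y \<in> {0..<q} \<times> {0..<q} \<times> C"
      and eq0: "F x = F y"
    then obtain c d p c' d' p' where xy: "x = (c,d,p)" "y = (c',d',p')" and
      a: "c \<in> {0..<q}" "d \<in> {0..<q}" "p \<in> C" "c' \<in> {0..<q}" "d' \<in> {0..<q}" "p' \<in> C"
      by auto
    have eq: "F (c,d,p) = F (c',d',p')" using eq0 xy by simp
    have l: "length p = L" "length p' = L" using a C_def Paths_def by auto
    have "F (c,d,p) ! i = F (c',d',p') ! i" "F (c,d,p) ! j = F (c',d',p') ! j" using eq by auto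
    then have cd: "c = c'" "d = d'" using C[OF a(3)] l ij by (auto simp: F_def nth_list_update)
    have "p = p'"
    proof (rule nth_equalityI)
      show "length p = length p'" using l by simp
      fix k assume k: "k < length p"
      show "p!k = p'!k"
      proof (cases "k = i \<or> k = j")
        case True then show ?thesis using C[OF a(3)] C[OF a(6)] by auto
      next
        case False
        have "F (c,d,p) ! k = F (c',d',p') ! k" using eq by simp
        then show ?thesis using False by (simp add: F_def)
      qed
    qed
    then show "x = y" using cd xy by simp
  qed
  moreover have "F ` ({0..<q} \<times> {0..<q} \<times> C) \<subseteq> Paths q L"
  proof (rule image_subsetI)
    fix x assume "x \<in> {0..<q} \<times> {0..<q} \<times> C"
    then obtain c d p where x: "x = (c,d,p)" and a: "c \<in> {0..<q}" "d \<in> {0..<q}" "p \<in> C" by auto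
    have l: "length p = L" and pd: "\<forall>k<L. p!k div q = k" using a C_def Paths_def by auto
    show "F x \<in> Paths q L"
      unfolding Paths_def F_def x using l pd a(1,2) ij C[OF a(3)]
      by (auto simp: nth_list_update)
  qed
  ultimately have "card ({0..<q} \<times> {0..<q} \<times> C) \<le> card (Paths q L)"
    using card_inj_on_le finite_Paths[OF assms(1)] by blast
  then show ?thesis by (simp add: card_cartesian_product C_def)
qed

lemma sep_sub: assumes "separates G s t A" shows "A \<subseteq> Pow (arcs G)"
proof
  fix x assume "x \<in> A"
  then obtain e f where "e \<in> arcs G" "f \<in> arcs G" "x = {e,f}"
    using assms unfolding separates_def by metis
  then show "x \<in> Pow (arcs G)" by simp
qed

lemma sfp_card: assumes "0 < q" "separates (Gr q L) 0 L A"
  shows "q*q \<le> card A"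
proof -
  have s1: "\<forall>x\<in>A. \<exists>e f. e \<in> arcs (Gr q L) \<and> f \<in> arcs (Gr q L) \<and> e \<noteq> f \<and> x = {e, f}"
    and s2: "\<forall>p\<in>st_paths (Gr q L) 0 L. \<exists>x\<in>A. x \<subseteq> set p"
    using assms(2) unfolding separates_def by auto
  have sub: "A \<subseteq> Pow (arcs (Gr q L))"
  proof
    fix x assume "x \<in> A"
    then obtain e f where "e \<in> arcs (Gr q L)" "f \<in> arcs (Gr q L)" "x = {e,f}" using s1 by metis
    then show "x \<in> Pow (arcs (Gr q L))" by simp
  qed
  have fA: "finite A" by (rule finite_subset[OF sub]) (simp add: Gr_def)
  have pe: "\<exists>e f. e \<noteq> f \<and> x = {e,f}" if "x \<in> A" for x
    using s1 that by metis
  define cov where "cov x = {p\<in>Paths q L. x \<subseteq> set p}" for x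
  have "Paths q L \<subseteq> (\<Union>x\<in>A. cov x)"
  proof
    fix p assume "p \<in> Paths q L"
    then have "p \<in> st_paths (Gr q L) 0 L" using st_paths_Gr[OF assms(1)] by simp
    then obtain x where "x \<in> A" "x \<subseteq> set p" using s2 by metis
    then show "p \<in> (\<Union>x\<in>A. cov x)" using \<open>p \<in> Paths q L\<close> unfolding cov_def by blast
  qed
  then have "card (Paths q L) \<le> (\<Sum>x\<in>A. card (cov x))"
  proof -
    have "finite (\<Union>x\<in>A. cov x)"
      using fA finite_Paths[OF assms(1)] by (auto simp: cov_def)
    then have "card (Paths q L) \<le> card (\<Union>x\<in>A. cov x)"
      using card_mono \<open>Paths q L \<subseteq> (\<Union>x\<in>A. cov x)\<close> by blast
    also have "\<dots> \<le> (\<Sum>x\<in>A. card (cov x))" using card_UN_le[OF fA] by blast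
    finally show ?thesis .
  qed
  then have "q*q*card (Paths q L) \<le> q*q*(\<Sum>x\<in>A. card (cov x))"
    by (rule mult_le_mono2)
  also have "\<dots> = (\<Sum>x\<in>A. q*q*card (cov x))"
    by (rule sum_distrib_left)
  also have "\<dots> \<le> (\<Sum>x\<in>A. card (Paths q L))"
  proof (rule sum_mono)
    fix x assume "x \<in> A"
    then obtain e f where "e \<noteq> f" "x = {e,f}" using pe by blast
    then show "q*q*card (cov x) \<le> card (Paths q L)"
      using cov_bound[OF assms(1)] unfolding cov_def by blast
  qed
  also have "\<dots> = card A * card (Paths q L)" by simp
  finally have "q*q*card (Paths q L) \<le> card A * card (Paths q L)" .
  moreover have "0 < card (Paths q L)"
    using Paths_ne[OF assms(1)] finite_Paths[OF assms(1)] card_gt_0_iff by blast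
  ultimately show ?thesis using mult_le_cancel2[of "q*q" "card (Paths q L)" "card A"] by blast
qed

theorem lemma1:
  fixes N :: nat
  shows "\<exists>(G :: (nat, nat) pre_digraph) s t.
           fin_digraph G \<and> s \<in> verts G \<and> t \<in> verts G \<and> s \<noteq> t \<and>
           (\<exists>\<A>. separates G s t \<A>) \<and>
           sfp_min G s t \<ge> adp_max G s t + N"
proof -
  define q where "q = N + 1"
  define L where "L = (q+1)*(q+1) + 1"
  have q0: "0 < q" by (simp add: q_def)
  have L2: "2 \<le> L" by (simp add: L_def)
  have fin: "fin_digraph (Gr q L)"
  proof
    fix e assume "e \<in> arcs (Gr q L)"
    then have "e < L*q" by (simp add: Gr_def)
    then have "e div q < L" by (simp add: div_less_iff_less_mult q0)
    then show "tail (Gr q L) e \<in> verts (Gr q L)" "head (Gr q L) e \<in> verts (Gr q L)"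
      by (auto simp: Gr_def)
  qed (simp_all add: Gr_def)
  define A0 where "A0 = {{a,b} | a b. a < q \<and> q \<le> b \<and> b < 2*q}"
  have sepA0: "separates (Gr q L) 0 L A0"
    unfolding separates_def
  proof (intro conjI ballI)
    fix x assume "x \<in> A0"
    then obtain a b where ab: "x = {a,b}" "a < q" "q \<le> b" "b < 2*q" by (auto simp: A0_def)
    have "2*q \<le> L*q" using L2 by (intro mult_le_mono1)
    then show "\<exists>e f. e \<in> arcs (Gr q L) \<and> f \<in> arcs (Gr q L) \<and> e \<noteq> f \<and> x = {e, f}"
    proof -
      have "a \<noteq> b" using ab by simp
      moreover have "a < L*q" "b < L*q" using ab \<open>2*q \<le> L*q\<close> by linarith+
      ultimately show ?thesis using ab by (intro exI[of _ a] exI[of _ b]) (simp add: Gr_def)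
    qed
  next
    fix p assume "p \<in> st_paths (Gr q L) 0 L"
    then have p: "p \<in> Paths q L" using st_paths_Gr[OF q0] by simp
    then have d: "p!0 div q = 0" "p!1 div q = 1" and l: "length p = L" using L2 by (auto simp: Paths_def)
    have "p!0 < q" using d(1) q0 div_lt[of "p!0" q 0] by simp
    moreover have "q \<le> p!1" "p!1 < 2*q" using d(2) q0 div_lt[of "p!1" q 1]
    proof -
      show "p!1 < 2*q" using d(2) q0 div_lt[of "p!1" q 1] by simp
      show "q \<le> p!1" using div_less[of "p!1" q] d(2) by (cases "p!1 < q") auto
    qed
    ultimately have "{p!0, p!1} \<in> A0" unfolding A0_def by blast
    moreover have "{p!0, p!1} \<subseteq> set p" using l L2 by auto
    ultimately show "\<exists>x\<in>A0. x \<subseteq> set p" by blast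
  qed
  have adp: "adp_max (Gr q L) 0 L \<le> q"
  proof -
    let ?S = "{card P | P. P \<subseteq> st_paths (Gr q L) 0 L \<and> almost_disjoint P}"
    have qL: "(q+1)*(q+1) < L" by (simp add: L_def)
    have b: "\<forall>a\<in>?S. a \<le> q"
    proof
      fix a assume "a \<in> ?S"
      then obtain P where "a = card P" "P \<subseteq> Paths q L" "almost_disjoint P"
        using st_paths_Gr[OF q0] by blast
      then show "a \<le> q" using adp_card[OF q0 qL] by blast
    qed
    then have "?S \<subseteq> {..q}" by blast
    then have f: "finite ?S" using finite_subset by blast
    have ne: "?S \<noteq> {}" unfolding almost_disjoint_def by blast
    show ?thesis unfolding adp_max_def using Max_le_iff[OF f ne] b by blast
  qed
  have sfp: "q*q \<le> sfp_min (Gr q L) 0 L"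
  proof -
    define S where "S = {card A | A. separates (Gr q L) 0 L A}"
    define K where "K = card (Pow (arcs (Gr q L)))"
    have fP: "finite (Pow (arcs (Gr q L)))" by (simp add: Gr_def)
    have bnd: "a \<le> K \<and> q*q \<le> a" if "a \<in> S" for a
    proof -
      from that obtain A where A: "a = card A" "separates (Gr q L) 0 L A" unfolding S_def by blast
      have "A \<subseteq> Pow (arcs (Gr q L))" using A(2) by (rule sep_sub)
      then have "card A \<le> K" unfolding K_def using fP by (rule card_mono[rotated])
      then show ?thesis using A sfp_card[OF q0 A(2)] by simp
    qed
    have "S \<subseteq> {..K}" using bnd by auto
    then have f: "finite S" using finite_subset by blast
    have "card A0 \<in> S" unfolding S_def using sepA0 by blast
    then have ne: "S \<noteq> {}" by blast
    have "q*q \<le> Min S" using Min_ge_iff[OF f ne] bnd by blast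
    then show ?thesis unfolding sfp_min_def S_def .
  qed
  have "q + N \<le> q*q" unfolding q_def by (simp add: algebra_simps)
  then have "sfp_min (Gr q L) 0 L \<ge> adp_max (Gr q L) 0 L + N" using adp sfp by linarith
  moreover have "(0::nat) \<in> verts (Gr q L)" "L \<in> verts (Gr q L)" "(0::nat) \<noteq> L"
    using L2 by (auto simp: Gr_def)
  ultimately show ?thesis using fin sepA0
    by (intro exI[of _ "Gr q L"] exI[of _ "0::nat"] exI[of _ L] conjI exI[of _ A0]) simp_all
qed

end
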